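(* For $n\ge1$, let $X_n$ be the degree of symmetry of a uniformly random binary tree with $n$ nodes. Then $X_n$ converges to a discrete limit law with $$\lim_{n\to\infty}\Pr(X_n=k)=\frac12\binom{2k}{k}\left(\frac{3}{16}\right)^k\quad\text{for all }k\ge0,$$ and $\mathbb{E}X_n=\frac32+o(1)$, $\mathbb{V}X_n=6+o(1)$.
   Context: A binary tree is a rooted tree in which each node has at most two children, distinguished as left and right. The address of a node is the word over $\{L,R\}$ recording the left/right steps from the root to it; its complement swaps $L$ and $R$. Two nodes are mirror images if their addresses are complements of each other. The degree of symmetry $\mathrm{ds}(T)$ is the number of unordered pairs of distinct nodes (hence not involving the root) that are mirror images of each other. *)

theory Defs
  imports Complex_Main
begin

datatype bt = Leaf | Node bt bt

fun nodes :: "bt \<Rightarrow> nat" where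
  "nodes Leaf = 0"
| "nodes (Node l r) = Suc (nodes l + nodes r)"

datatype dir = L | R

fun flip :: "dir \<Rightarrow> dir" where
  "flip L = R"
| "flip R = L"

definition compl :: "dir list \<Rightarrow> dir list" where
  "compl w = map flip w"

fun addrs :: "bt \<Rightarrow> dir list set" where
  "addrs Leaf = {}"
| "addrs (Node l r) = {[]} \<union> (\<lambda>w. L # w) ` addrs l \<union> (\<lambda>w. R # w) ` addrs r"

definition ds :: "bt \<Rightarrow> nat" where
  "ds t = card {{u, v} | u v. u \<in> addrs t \<and> v \<in> addrs t \<and> u \<noteq> v \<and> v = compl u}"

definition trees :: "nat \<Rightarrow> bt set" where
  "trees n = {t. nodes t = n}"

definition prob_ds :: "nat \<Rightarrow> nat \<Rightarrow> real" where
  "prob_ds n k = real (card {t \<in> trees n. ds t = k}) / real (card (trees n))"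

definition exp_ds :: "nat \<Rightarrow> real" where
  "exp_ds n = (\<Sum>t\<in>trees n. real (ds t)) / real (card (trees n))"

definition var_ds :: "nat \<Rightarrow> real" where
  "var_ds n = (\<Sum>t\<in>trees n. (real (ds t) - exp_ds n)^2) / real (card (trees n))"

end

theory Submission
  imports Defs "HOL-Computational_Algebra.Formal_Power_Series" "HOL-Real_Asymp.Real_Asymp" "HOL-Analysis.Uniform_Limit"
begin

fun ic :: "bt \<Rightarrow> bt \<Rightarrow> nat" where
  "ic (Node a1 a2) (Node b1 b2) = Suc (ic a1 b1 + ic a2 b2)"
| "ic _ _ = 0"

fun mirror :: "bt \<Rightarrow> bt" where
  "mirror Leaf = Leaf"
| "mirror (Node l r) = Node (mirror r) (mirror l)"

lemma compl_simps[simp]: "compl [] = []" "compl (x # w) = flip x # compl w"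
  by (simp_all add: compl_def)

lemma flip_flip[simp]: "flip (flip x) = x"
  by (cases x) auto

lemma compl_compl[simp]: "compl (compl w) = w"
  by (induction w) auto

lemma mem_compl_image[simp]: "w \<in> compl ` A \<longleftrightarrow> compl w \<in> A"
  by (metis compl_compl image_iff)

lemma finite_addrs[simp]: "finite (addrs t)"
  by (induction t) auto

lemma addrs_mirror: "addrs (mirror t) = compl ` addrs t"
  by (induction t) (simp_all add: image_Un image_image Un_ac)

lemma card_addrs_inter: "card (addrs a \<inter> addrs b) = ic a b"
proof (induction a b rule: ic.induct)
  case (1 a1 a2 b1 b2)
  have eq: "addrs (Node a1 a2) \<inter> addrs (Node b1 b2) =
     insert [] ((\<lambda>w. L # w) ` (addrs a1 \<inter> addrs b1) \<union> (\<lambda>w. R # w) ` (addrs a2 \<inter> addrs b2))"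
    by auto
  have "card (addrs (Node a1 a2) \<inter> addrs (Node b1 b2)) =
     Suc (card ((\<lambda>w. L # w) ` (addrs a1 \<inter> addrs b1)) + card ((\<lambda>w. R # w) ` (addrs a2 \<inter> addrs b2)))"
    unfolding eq by (subst card_insert_disjoint) (auto intro!: card_Un_disjoint)
  also have "\<dots> = Suc (ic a1 b1 + ic a2 b2)"
    using 1 by (simp add: card_image)
  finally show ?case by simp
qed auto

lemma ds_Leaf[simp]: "ds Leaf = 0"
  by (simp add: ds_def)

lemma ds_Node: "ds (Node l r) = ic l (mirror r)"
proof -
  let ?S = "{{u, v} | u v. u \<in> addrs (Node l r) \<and> v \<in> addrs (Node l r) \<and> u \<noteq> v \<and> v = compl u}"
  have eq: "?S = (\<lambda>w. {L # w, R # compl w}) ` (addrs l \<inter> addrs (mirror r))"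
  proof (rule set_eqI, rule iffI)
    fix x assume "x \<in> ?S"
    then obtain u where u: "u \<in> addrs (Node l r)" "compl u \<in> addrs (Node l r)" "u \<noteq> compl u"
      "x = {u, compl u}" by blast
    show "x \<in> (\<lambda>w. {L # w, R # compl w}) ` (addrs l \<inter> addrs (mirror r))"
    proof (cases u)
      case Nil then show ?thesis using u by simp
    next
      case (Cons d w)
      show ?thesis
      proof (cases d)
        case L
        then show ?thesis using u Cons by (auto simp: addrs_mirror)
      next
        case R
        then have "compl w \<in> addrs l" "w \<in> addrs r" using u Cons by auto
        moreover have "x = {L # compl w, R # compl (compl w)}" using u Cons R by auto
        ultimately show ?thesis by (auto simp: addrs_mirror)
      qed
    qed
  next
    fix x assume "x \<in> (\<lambda>w. {L # w, R # compl w}) ` (addrs l \<inter> addrs (mirror r))"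
    then obtain w where w: "w \<in> addrs l" "compl w \<in> addrs r" "x = {L # w, R # compl w}"
      by (auto simp: addrs_mirror)
    then show "x \<in> ?S"
      by (auto intro!: exI[of _ "L # w"])
  qed
  have inj: "inj_on (\<lambda>w. {L # w, R # compl w}) (addrs l \<inter> addrs (mirror r))"
    by (rule inj_onI) (auto simp: doubleton_eq_iff)
  show ?thesis
    unfolding ds_def eq card_image[OF inj] card_addrs_inter ..
qed

lemma nodes_mirror[simp]: "nodes (mirror t) = nodes t"
  by (induction t) auto

lemma mirror_mirror[simp]: "mirror (mirror t) = t"
  by (induction t) auto

lemma ic_le: "ic a b \<le> nodes a"
  by (induction a b rule: ic.induct) auto

lemma ic_le2: "ic a b \<le> nodes b"
  by (induction a b rule: ic.induct) auto

lemma ic_0_iff: "ic a b = 0 \<longleftrightarrow> a = Leaf \<or> b = Leaf"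
  by (cases a; cases b) auto

lemma ds_le: "ds t \<le> nodes t"
  by (cases t) (auto simp: ds_Node intro: le_SucI le_trans[OF ic_le])


definition T :: "nat \<Rightarrow> nat" where "T n = card (trees n)"

lemma trees_0: "trees 0 = {Leaf}"
  by (auto simp: trees_def elim: nodes.elims)

lemma trees_Suc: "trees (Suc n) = (\<lambda>(a,b). Node a b) ` (\<Union>j\<le>n. trees j \<times> trees (n-j))"
proof (rule set_eqI, rule iffI)
  fix t assume "t \<in> trees (Suc n)"
  then obtain a b where "t = Node a b" "nodes a + nodes b = n"
    by (cases t) (auto simp: trees_def)
  then show "t \<in> (\<lambda>(a,b). Node a b) ` (\<Union>j\<le>n. trees j \<times> trees (n-j))"
    by (auto simp: trees_def intro!: image_eqI[of _ _ "(a,b)"])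
qed (auto simp: trees_def)

lemma finite_trees[simp]: "finite (trees n)"
proof (induction n rule: less_induct)
  case (less n)
  show ?case
  proof (cases n)
    case (Suc m)
    have "finite (trees j \<times> trees (m - j))" if "j \<le> m" for j
      using less Suc that by (intro finite_cartesian_product) auto
    then show ?thesis using Suc by (simp add: trees_Suc)
  qed (simp add: trees_0)
qed

lemma T_0[simp]: "T 0 = 1"
  by (simp add: T_def trees_0)

lemma T_Suc: "T (Suc n) = (\<Sum>j\<le>n. T j * T (n - j))"
proof -
  have inj: "inj_on (\<lambda>(a,b). Node a b) (\<Union>j\<le>n. trees j \<times> trees (n-j))"
    by (auto intro!: inj_onI)
  have "T (Suc n) = card (\<Union>j\<le>n. trees j \<times> trees (n-j))"
    unfolding T_def trees_Suc card_image[OF inj] ..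
  also have "\<dots> = (\<Sum>j\<le>n. card (trees j \<times> trees (n-j)))"
    by (rule card_UN_disjoint) (simp, simp, auto simp: trees_def)
  also have "\<dots> = (\<Sum>j\<le>n. T j * T (n - j))"
    by (simp add: T_def card_cartesian_product)
  finally show ?thesis .
qed

lemma T_pos: "T n > 0"
proof (induction n)
  case (Suc n)
  have "T 0 * T (n - 0) \<le> (\<Sum>j\<le>n. T j * T (n - j))"
    by (rule member_le_sum) auto
  then show ?case using Suc by (simp add: T_Suc)
qed simp

definition Pset :: "nat \<Rightarrow> nat \<Rightarrow> (bt \<times> bt) set" where
  "Pset n k = {(a,b). nodes a + nodes b = n \<and> ic a b = k}"

lemma finite_Pset[simp]: "finite (Pset n k)"
proof (rule finite_subset)
  show "Pset n k \<subseteq> (\<Union>j\<le>n. trees j \<times> trees (n-j))"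
    by (auto simp: Pset_def trees_def)
qed auto

lemma card_ds: "card {t \<in> trees (Suc n). ds t = k} = card (Pset n k)"
proof -
  have eq: "{t \<in> trees (Suc n). ds t = k} = (\<lambda>(a,b). Node a (mirror b)) ` Pset n k"
  proof (rule set_eqI, rule iffI)
    fix t assume "t \<in> {t \<in> trees (Suc n). ds t = k}"
    then obtain a b where "t = Node a b" "nodes a + nodes b = n" "ic a (mirror b) = k"
      by (cases t) (auto simp: trees_def ds_Node)
    then show "t \<in> (\<lambda>(a,b). Node a (mirror b)) ` Pset n k"
      by (auto simp: Pset_def intro!: image_eqI[of _ _ "(a, mirror b)"])
  qed (auto simp: trees_def ds_Node Pset_def)
  have inj: "inj_on (\<lambda>(a,b). Node a (mirror b)) (Pset n k)"
    by (auto intro!: inj_onI) (metis mirror_mirror)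
  show ?thesis unfolding eq card_image[OF inj] ..
qed

lemma Pset_0: "Pset n 0 = (\<lambda>b. (Leaf,b)) ` trees n \<union> (\<lambda>a. (a,Leaf)) ` trees n"
  by (auto simp: Pset_def trees_def ic_0_iff)

lemma card_Pset_0: "real (card (Pset n 0)) = 2 * real (T n) - (if n = 0 then 1 else 0)"
proof -
  have i: "(\<lambda>b. (Leaf,b)) ` trees n \<inter> (\<lambda>a. (a,Leaf)) ` trees n = (if n = 0 then {(Leaf,Leaf)} else {})"
    by (auto simp: trees_def)
  have "card ((\<lambda>b. (Leaf,b)) ` trees n) + card ((\<lambda>a. (a,Leaf)) ` trees n) = 
    card (Pset n 0) + card ((\<lambda>b. (Leaf,b)) ` trees n \<inter> (\<lambda>a. (a,Leaf)) ` trees n)"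
    unfolding Pset_0 by (rule card_Un_Int) auto
  moreover have "card ((\<lambda>b. (Leaf,b)) ` trees n) = T n" "card ((\<lambda>a. (a,Leaf)) ` trees n) = T n"
    by (auto simp: T_def card_image inj_on_def)
  ultimately show ?thesis using i by (auto split: if_splits)
qed

lemma Pset_Suc_small: "n < 2 \<Longrightarrow> Pset n (Suc k) = {}"
  by (auto simp: Pset_def elim!: ic.elims)

lemma Pset_Suc: "Pset (Suc (Suc m)) (Suc k) =
  (\<lambda>((a1,b1),(a2,b2)). (Node a1 a2, Node b1 b2)) ` (\<Union>(j,i)\<in>{..k}\<times>{..m}. Pset i j \<times> Pset (m-i) (k-j))"
proof (rule set_eqI, rule iffI)
  fix x assume "x \<in> Pset (Suc (Suc m)) (Suc k)"
  then obtain a1 a2 b1 b2 where x: "x = (Node a1 a2, Node b1 b2)"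
     "nodes a1 + nodes a2 + nodes b1 + nodes b2 = m" "ic a1 b1 + ic a2 b2 = k"
    by (auto simp: Pset_def elim!: ic.elims)
  then show "x \<in> (\<lambda>((a1,b1),(a2,b2)). (Node a1 a2, Node b1 b2)) ` (\<Union>(j,i)\<in>{..k}\<times>{..m}. Pset i j \<times> Pset (m-i) (k-j))"
    by (auto simp: Pset_def intro!: image_eqI[of _ _ "((a1,b1),(a2,b2))"] bexI[of _ "(ic a1 b1, nodes a1 + nodes b1)"])
qed (auto simp: Pset_def)

lemma card_Pset_Suc: "card (Pset (Suc (Suc m)) (Suc k)) =
   (\<Sum>j\<le>k. \<Sum>i\<le>m. card (Pset i j) * card (Pset (m-i) (k-j)))"
proof -
  let ?f = "(\<lambda>((a1,b1),(a2,b2)). (Node a1 a2, Node b1 b2)) :: (bt\<times>bt)\<times>(bt\<times>bt) \<Rightarrow> bt \<times> bt"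
  let ?U = "\<Union>(j,i)\<in>{..k}\<times>{..m}. Pset i j \<times> Pset (m-i) (k-j)"
  have inj: "inj_on ?f ?U" by (auto intro!: inj_onI)
  have "card (Pset (Suc (Suc m)) (Suc k)) = card ?U"
    unfolding Pset_Suc card_image[OF inj] ..
  also have "\<dots> = (\<Sum>x\<in>{..k}\<times>{..m}. card ((\<lambda>(j,i). Pset i j \<times> Pset (m-i) (k-j)) x))"
    by (rule card_UN_disjoint) (simp, simp, auto simp: Pset_def)
  also have "\<dots> = (\<Sum>(j,i)\<in>{..k}\<times>{..m}. card (Pset i j \<times> Pset (m-i) (k-j)))"
    by (simp add: case_prod_unfold)
  also have "\<dots> = (\<Sum>j\<le>k. \<Sum>i\<le>m. card (Pset i j) * card (Pset (m-i) (k-j)))"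
    by (simp add: sum.cartesian_product[symmetric] card_cartesian_product)
  finally show ?thesis .
qed


definition Bf :: "real fps" where "Bf = Abs_fps (\<lambda>n. real (T n))"

lemma Bf_nth[simp]: "fps_nth Bf n = real (T n)"
  by (simp add: Bf_def)

lemma Bf_eq: "Bf = 1 + fps_X * Bf^2"
proof (rule fps_ext)
  fix n show "fps_nth Bf n = fps_nth (1 + fps_X * Bf^2) n"
  proof (cases n)
    case (Suc m)
    have "real (T (Suc m)) = (\<Sum>j\<le>m. real (T j) * real (T (m - j)))"
      by (simp add: T_Suc)
    have "fps_nth (fps_X * Bf^2) n = fps_nth (Bf * Bf) m" using Suc by (simp add: power2_eq_square)
    also have "\<dots> = (\<Sum>j\<le>m. real (T j) * real (T (m - j)))"
      by (simp add: fps_mult_nth atLeast0AtMost)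
    finally show ?thesis using Suc \<open>real (T (Suc m)) = _\<close> by simp
  qed simp
qed

definition Ff :: "nat \<Rightarrow> nat \<Rightarrow> real" where "Ff r q = fps_nth (Bf ^ r) q"

lemma Ff_0_right[simp]: "Ff r 0 = 1"
  by (simp add: Ff_def fps_power_zeroth)

lemma Ff_0_Suc[simp]: "Ff 0 (Suc q) = 0"
  by (simp add: Ff_def)

lemma Ff_rec: "Ff (Suc r) (Suc q) = Ff r (Suc q) + Ff (Suc (Suc r)) q"
proof -
  have "Bf ^ Suc r = Bf ^ r + fps_X * Bf ^ Suc (Suc r)"
  proof -
    have "Bf ^ Suc r = Bf ^ r * Bf" by simp
    also have "\<dots> = Bf ^ r * (1 + fps_X * Bf^2)" by (subst Bf_eq) simp
    also have "\<dots> = Bf ^ r + fps_X * Bf ^ Suc (Suc r)" by (simp add: algebra_simps power2_eq_square)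
    finally show ?thesis .
  qed
  then have "fps_nth (Bf ^ Suc r) (Suc q) = fps_nth (Bf ^ r + fps_X * Bf ^ Suc (Suc r)) (Suc q)"
    by (simp only:)
  also have "\<dots> = fps_nth (Bf ^ r) (Suc q) + fps_nth (Bf ^ Suc (Suc r)) q"
    by (simp del: power_Suc)
  finally show ?thesis unfolding Ff_def .
qed

lemma closed_step:
  "real (s + 2) * fact (2 * Suc q + s + 1) / (fact (Suc q) * fact (Suc q + s + 2)) =
   real (s + 1) * fact (2 * Suc q + s) / (fact (Suc q) * fact (Suc q + s + 1)) +
   real (s + 3) * fact (2 * q + s + 2) / (fact q * fact (q + s + 3))"
proof -
  have e1: "2 * Suc q + s + 1 = Suc (2 * q + s + 2)" by simp
  have e2: "2 * Suc q + s = 2 * q + s + 2" by simp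
  have e3: "Suc q + s + 2 = Suc (q + s + 2)" by simp
  have e4: "Suc q + s + 1 = q + s + 2" by simp
  have e5: "q + s + 3 = Suc (q + s + 2)" by simp
  show ?thesis
    unfolding e1 e2 e3 e4 e5 fact_Suc
    by (simp add: add_frac_eq frac_eq_eq del: divide_const_simps; simp add: algebra_simps)
qed

lemma Ff_closed: "Ff (Suc s) q = real (s + 1) * fact (2 * q + s) / (fact q * fact (q + s + 1))"
proof (induction q arbitrary: s)
  case 0
  then show ?case by simp
next
  case (Suc q)
  note outer = Suc.IH
  show ?case
  proof (induction s)
    case 0
    have "Ff 1 (Suc q) = Ff 2 q" using Ff_rec[of 0 q] by (simp add: numeral_2_eq_2)
    also have "\<dots> = 2 * fact (2 * q + 1) / (fact q * fact (q + 2))"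
      using Suc.IH[of 1] by (simp add: numeral_2_eq_2)
    also have "\<dots> = fact (2 * Suc q) / (fact (Suc q) * fact (Suc q + 1))"
    proof -
      have e1: "2 * Suc q = Suc (2 * q + 1)" by simp
      have e2: "Suc q + 1 = q + 2" by simp
      show ?thesis unfolding e1 e2 fact_Suc
        by (simp add: add_frac_eq frac_eq_eq del: divide_const_simps; simp add: algebra_simps)
    qed
    finally show ?case by simp
  next
    case (Suc s)
    have "Ff (Suc (Suc s)) (Suc q) = Ff (Suc s) (Suc q) + Ff (Suc (Suc (Suc s))) q"
      by (rule Ff_rec)
    also have "\<dots> = real (s + 1) * fact (2 * Suc q + s) / (fact (Suc q) * fact (Suc q + s + 1)) +
         real (s + 3) * fact (2 * q + s + 2) / (fact q * fact (q + s + 3))"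
    proof -
      have "Ff (Suc (Suc (Suc s))) q = real (s + 3) * fact (2 * q + s + 2) / (fact q * fact (q + s + 3))"
      proof -
        have eqs: "Suc (Suc s) + 1 = s + 3" "2*q + Suc (Suc s) = 2*q+s+2" "q + Suc (Suc s) + 1 = q + s + 3"
          by simp_all
        show ?thesis using outer[of "Suc (Suc s)", unfolded eqs] by simp
      qed
      then show ?thesis using Suc.IH by simp
    qed
    also have "\<dots> = real (s + 2) * fact (2 * Suc q + s + 1) / (fact (Suc q) * fact (Suc q + s + 2))"
      by (rule closed_step[symmetric])
    finally show ?case by (simp add: add_ac)
  qed
qed


lemma T_closed: "real (T q) = fact (2*q) / (fact q * fact (q+1))"
proof -
  have "real (T q) = Ff 1 q" by (simp add: Ff_def)
  then show ?thesis using Ff_closed[of 0 q] by simp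
qed

lemma T_ratio: "real (T (Suc q)) * (real q + 2) = 2 * (2 * real q + 1) * real (T q)"
proof -
  have e1: "2 * Suc q = Suc (Suc (2*q))" "Suc q + 1 = Suc (Suc q)" by simp_all
  show ?thesis unfolding T_closed e1 fact_Suc
    by (simp add: add_frac_eq frac_eq_eq del: divide_const_simps; simp add: algebra_simps)
qed

lemma Ff_ratio: "Ff (Suc (Suc s)) q * (real (s+1) * real (q+s+2)) = real (s+2) * real (2*q+s+1) * Ff (Suc s) q"
proof -
  have A: "Ff (Suc (Suc s)) q = real (s + 2) * fact (2 * q + s + 1) / (fact q * fact (q + s + 2))"
    using Ff_closed[of "Suc s" q] by (simp add: add_ac)
  have e1: "2 * q + s + 1 = Suc (2*q+s)" "q + s + 2 = Suc (q+s+1)" by simp_all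
  show ?thesis unfolding A Ff_closed e1 fact_Suc
    by (simp add: add_frac_eq frac_eq_eq del: divide_const_simps; simp add: algebra_simps)
qed

lemma T_binom: "real (T k) * (real k + 1) = real ((2*k) choose k)"
proof -
  have "real ((2*k) choose k) = fact (2*k) / (fact k * fact k)"
    by (simp add: binomial_fact)
  moreover have e1: "k + 1 = Suc k" by simp
  ultimately show ?thesis unfolding T_closed e1 fact_Suc
    by (simp add: add_frac_eq frac_eq_eq del: divide_const_simps; simp add: algebra_simps)
qed

lemma Ff_nonneg: "Ff r q \<ge> 0"
proof (cases r)
  case 0 then show ?thesis by (simp add: Ff_def)
next
  case (Suc s) then show ?thesis by (simp only: Ff_closed) simp
qed


definition Af :: "real fps" where "Af = 1 + fps_const 2 * (fps_X * Bf^2)"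

definition Cf :: "nat \<Rightarrow> real fps" where "Cf k = Abs_fps (\<lambda>n. real (card (Pset n k)))"

lemma Bf2_nth: "fps_nth (Bf^2) m = real (T (Suc m))"
proof -
  have "real (T (Suc m)) = fps_nth (1 + fps_X * Bf^2) (Suc m)"
    by (subst Bf_eq[symmetric]) simp
  then show ?thesis by simp
qed

lemma Cf_0: "Cf 0 = Af"
proof (rule fps_ext)
  fix n show "fps_nth (Cf 0) n = fps_nth Af n"
    by (cases n) (simp_all add: Cf_def Af_def card_Pset_0 Bf2_nth)
qed

lemma Cf_Suc: "Cf (Suc k) = fps_X^2 * (\<Sum>j\<le>k. Cf j * Cf (k-j))"
proof (rule fps_ext)
  fix n show "fps_nth (Cf (Suc k)) n = fps_nth (fps_X^2 * (\<Sum>j\<le>k. Cf j * Cf (k-j))) n"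
  proof (cases "n < 2")
    case True
    then show ?thesis by (simp add: Cf_def Pset_Suc_small fps_X_power_mult_nth)
  next
    case False
    then obtain m where m: "n = Suc (Suc m)" by (metis add_2_eq_Suc le_add_diff_inverse not_less)
    have "fps_nth (fps_X^2 * (\<Sum>j\<le>k. Cf j * Cf (k-j))) n = fps_nth (\<Sum>j\<le>k. Cf j * Cf (k-j)) m"
      using m by (simp add: fps_X_power_mult_nth)
    also have "\<dots> = (\<Sum>j\<le>k. \<Sum>i\<le>m. real (card (Pset i j)) * real (card (Pset (m-i) (k-j))))"
      by (simp add: fps_sum_nth fps_mult_nth atLeast0AtMost Cf_def)
    also have "\<dots> = real (card (Pset n (Suc k)))"
      unfolding m card_Pset_Suc by simp
    finally show ?thesis by (simp add: Cf_def)
  qed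
qed

lemma fps_const_sum: "fps_const (sum f S) = (\<Sum>x\<in>S. fps_const (f x))"
  by (induction S rule: infinite_finite_induct) (simp_all flip: fps_const_add)

lemma Cf_closed: "Cf k = fps_const (real (T k)) * (fps_X^(2*k) * Af^(Suc k))"
proof (induction k rule: less_induct)
  case (less k)
  show ?case
  proof (cases k)
    case 0
    then show ?thesis by (simp add: Cf_0)
  next
    case (Suc k')
    have tm: "Cf j * Cf (k'-j) = fps_const (real (T j) * real (T (k'-j))) * (fps_X^(2*k') * Af^(Suc (Suc k')))"
      if "j \<le> k'" for j
    proof -
      have j: "j < k" "k' - j < k" using that Suc by auto
      have p1: "fps_X^(2*j) * fps_X^(2*(k'-j)) = (fps_X^(2*k') :: real fps)"
        using that by (simp flip: power_add)
      have p2: "Af^(Suc j) * Af^(Suc (k'-j)) = Af^(Suc (Suc k'))"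
        using that by (simp flip: power_add)
      have "Cf j * Cf (k'-j) = fps_const (real (T j)) * fps_const (real (T (k'-j))) *
          ((fps_X^(2*j) * fps_X^(2*(k'-j))) * (Af^(Suc j) * Af^(Suc (k'-j))))"
        unfolding less.IH[OF j(1)] less.IH[OF j(2)] by (simp only: ac_simps)
      then show ?thesis unfolding p1 p2 by simp
    qed
    have "Cf k = fps_X^2 * (\<Sum>j\<le>k'. fps_const (real (T j) * real (T (k'-j))) * (fps_X^(2*k') * Af^(Suc (Suc k'))))"
      unfolding Suc Cf_Suc by (simp add: tm)
    also have "\<dots> = fps_X^2 * (fps_const (\<Sum>j\<le>k'. real (T j) * real (T (k'-j))) * (fps_X^(2*k') * Af^(Suc (Suc k'))))"
      by (simp add: fps_const_sum sum_distrib_right)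
    also have "(\<Sum>j\<le>k'. real (T j) * real (T (k'-j))) = real (T k)"
      unfolding Suc T_Suc by simp
    also have "fps_X^2 * (fps_const (real (T k)) * (fps_X^(2*k') * Af^(Suc (Suc k')))) =
        fps_const (real (T k)) * ((fps_X^2 * fps_X^(2*k')) * Af^(Suc k))"
      unfolding Suc by (simp only: ac_simps)
    also have "fps_X^2 * fps_X^(2*k') = (fps_X^(2*k) :: real fps)"
      unfolding Suc by (simp flip: power_add)
    finally show ?thesis .
  qed
qed

lemma card_Pset_closed: "real (card (Pset n k)) = real (T k) * (if 2*k \<le> n then fps_nth (Af^(Suc k)) (n - 2*k) else 0)"
proof -
  have "real (card (Pset n k)) = fps_nth (Cf k) n" by (simp add: Cf_def)
  also have "\<dots> = real (T k) * (if 2*k \<le> n then fps_nth (Af^(Suc k)) (n - 2*k) else 0)"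
    unfolding Cf_closed by (simp add: fps_X_power_mult_nth del: power_Suc)
  finally show ?thesis .
qed

lemma Af_pow_nth: "fps_nth (Af ^ s) p = (\<Sum>i\<le>s. real (s choose i) * 2^i * (if i \<le> p then Ff (2*i) (p-i) else 0))"
proof -
  have "Af ^ s = (fps_const 2 * (fps_X * Bf^2) + 1) ^ s" by (simp add: Af_def add.commute)
  also have "\<dots> = (\<Sum>i\<le>s. of_nat (s choose i) * (fps_const 2 * (fps_X * Bf^2))^i * 1^(s-i))"
    by (rule binomial_ring)
  also have "\<dots> = (\<Sum>i\<le>s. fps_const (real (s choose i) * 2^i) * (fps_X^i * Bf^(2*i)))"
    by (intro sum.cong refl) (simp add: power_mult_distrib fps_of_nat[symmetric] mult_ac flip: power_mult)
  finally show ?thesis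
    by (simp add: fps_sum_nth fps_X_power_mult_nth) (intro sum.cong refl, simp add: Ff_def not_less)
qed


lemma T_pos_real: "real (T n) > 0"
  using T_pos by simp

lemma T_step_ratio: "real (T m) / real (T (m + 1)) = (real m + 2) / (4 * real m + 2)"
proof -
  have "real (T (Suc m)) * (real m + 2) = 2 * (2 * real m + 1) * real (T m)" by (rule T_ratio)
  then show ?thesis using T_pos_real[of m] T_pos_real[of "Suc m"]
    by (simp add: field_simps; simp add: algebra_simps)
qed

lemma T_nz[simp]: "T n \<noteq> 0"
  using T_pos[of n] by simp

lemma T_lim_ratio: "(\<lambda>q. real (T q) / real (T (q + d))) \<longlonglongrightarrow> (1/4)^d"
proof (induction d)
  case 0
  then show ?case by simp
next
  case (Suc d)
  have r: "(\<lambda>m. real (T m) / real (T (m + 1))) \<longlonglongrightarrow> 1/4"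
    unfolding T_step_ratio by real_asymp
  have r2: "(\<lambda>q. real (T (q + d)) / real (T (q + d + 1))) \<longlonglongrightarrow> 1/4"
    using LIMSEQ_ignore_initial_segment[OF r, of d] by simp
  have "(\<lambda>q. real (T q) / real (T (q + d)) * (real (T (q + d)) / real (T (q + d + 1)))) \<longlonglongrightarrow> (1/4)^d * (1/4)"
    by (rule tendsto_mult[OF Suc r2])
  moreover have "\<And>q. real (T q) / real (T (q + d)) * (real (T (q + d)) / real (T (q + d + 1))) =
      real (T q) / real (T (q + Suc d))"
    using T_pos_real by (simp add: field_simps)
  ultimately show ?case by (simp add: mult.commute)
qed

lemma Ff_1: "Ff 1 q = real (T q)"
  by (simp add: Ff_def)

lemma aux_div: fixes a b c d t :: real
  assumes "a * c = b * d" "c \<noteq> 0" shows "a / t = b / c * (d / t)"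
proof -
  have "a = b * d / c" using assms by (simp add: eq_divide_eq)
  then show ?thesis by simp
qed

lemma Ff_ratio': "Ff (Suc (Suc s)) q / real (T q) =
   (real (s+2) * real (2*q+s+1)) / (real (s+1) * real (q+s+2)) * (Ff (Suc s) q / real (T q))"
proof -
  have h1: "Ff (Suc (Suc s)) q * (real (s+1) * real (q+s+2)) = real (s+2) * real (2*q+s+1) * Ff (Suc s) q"
    by (rule Ff_ratio)
  have h2: "real (s+1) * real (q+s+2) \<noteq> 0" by simp
  show ?thesis by (rule aux_div[OF h1 h2])
qed

lemma Ff_lim: "(\<lambda>q. Ff r q / real (T q)) \<longlonglongrightarrow> real r * 2^r / 2"
proof (induction r rule: nat_less_induct)
  case (1 r)
  show ?case
  proof (cases r)
    case 0
    have "(\<lambda>q. Ff 0 (Suc q) / real (T (Suc q))) \<longlonglongrightarrow> 0" by simp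
    then have "(\<lambda>q. Ff 0 q / real (T q)) \<longlonglongrightarrow> 0" by (rule LIMSEQ_imp_Suc)
    then show ?thesis using 0 by simp
  next
    case (Suc r')
    show ?thesis
    proof (cases r')
      case 0
      then show ?thesis using Suc by (simp add: Ff_def)
    next
      case (Suc s)
      have ih: "(\<lambda>q. Ff (Suc s) q / real (T q)) \<longlonglongrightarrow> real (Suc s) * 2^(Suc s) / 2"
        using 1 Suc \<open>r = Suc r'\<close> by auto
      have f0: "(\<lambda>q. ((real s+2) * (2*real q+real s+1)) / ((real s+1) * (real q+real s+2))) \<longlonglongrightarrow>
           (real s * 2 + 4) * inverse (real s + 1)"
        by real_asymp
      have f: "(\<lambda>q. (real (s+2) * real (2*q+s+1)) / (real (s+1) * real (q+s+2))) \<longlonglongrightarrow>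
           real (s+2) * 2 / real (s+1)"
        using f0 by (simp add: add_ac field_simps)
      have "(\<lambda>q. (real (s+2) * real (2*q+s+1)) / (real (s+1) * real (q+s+2)) * (Ff (Suc s) q / real (T q)))
         \<longlonglongrightarrow> real (s+2) * 2 / real (s+1) * (real (Suc s) * 2^(Suc s) / 2)"
        by (rule tendsto_mult[OF f ih])
      moreover have "real (s+2) * 2 / real (s+1) * (real (Suc s) * 2^(Suc s) / 2) = real r * 2^r / 2"
        using Suc \<open>r = Suc r'\<close> by (simp add: field_simps)
      ultimately show ?thesis
        using Suc \<open>r = Suc r'\<close> by (simp only: Ff_ratio')
    qed
  qed
qed


lemma T_le_4pow: "real (T k) \<le> 4^k"
proof (induction k)
  case (Suc k)
  have "real (T (Suc k)) * (real k + 2) = 2 * (2 * real k + 1) * real (T k)" by (rule T_ratio)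
  moreover have "2 * (2 * real k + 1) * real (T k) \<le> 4 * real (T k) * (real k + 2)"
    using T_pos_real[of k] by (simp add: algebra_simps)
  ultimately have "real (T (Suc k)) * (real k + 2) \<le> 4 * real (T k) * (real k + 2)" by simp
  then have "real (T (Suc k)) \<le> 4 * real (T k)" by (simp add: mult_le_cancel_right)
  then have "real (T (Suc k)) \<le> 4 * 4^k" using Suc.IH by linarith
  then show ?case by simp
qed simp

lemma T_ge: "real (T d) \<ge> 4^d / (real d + 1)^2"
proof (induction d)
  case (Suc d)
  have r: "real (T (Suc d)) * (real d + 2) = 2 * (2 * real d + 1) * real (T d)" by (rule T_ratio)
  have "4 ^ Suc d / (real (Suc d) + 1)^2 * (real d + 2) \<le> 2 * (2 * real d + 1) * (4^d / (real d + 1)^2)"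
  proof -
    have x: "real d + 2 > 0" "real d + 1 > 0" by auto
    have "4 * (real d + 1)^2 \<le> 2 * (2 * real d + 1) * (real d + 2)"
      by (simp add: power2_eq_square algebra_simps)
    then have "4 \<le> 2 * (2 * real d + 1) * (real d + 2) / (real d + 1)^2"
      using x by (simp add: le_divide_eq)
    then have "4 / (real d + 2) \<le> 2 * (2 * real d + 1) / (real d + 1)^2"
      using x by (simp add: divide_le_eq mult.commute mult.left_commute)
    then have le: "4 ^ d * (4 / (real d + 2)) \<le> 4^d * (2 * (2 * real d + 1) / (real d + 1)^2)"
      by (intro mult_left_mono) auto
    have "4 ^ Suc d / (real (Suc d) + 1)^2 * (real d + 2) = 4 ^ d * (4 / (real d + 2))"
      using x by (simp add: power2_eq_square add_ac)
    also note le
    also have "4^d * (2 * (2 * real d + 1) / (real d + 1)^2) = 2 * (2 * real d + 1) * (4^d / (real d + 1)^2)"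
      by simp
    finally show ?thesis .
  qed
  also have "\<dots> \<le> 2 * (2 * real d + 1) * real (T d)"
    using Suc by (intro mult_left_mono) auto
  also have "\<dots> = real (T (Suc d)) * (real d + 2)" using r by simp
  finally have "4 ^ Suc d / (real (Suc d) + 1)^2 * (real d + 2) \<le> real (T (Suc d)) * (real d + 2)" .
  then show ?case by (rule mult_right_le_imp_le) simp
qed simp

lemma T_mult_le: "real (T q) * real (T d) \<le> real (T (q + Suc d))"
proof -
  have "T q * T (q + d - q) \<le> (\<Sum>j\<le>q+d. T j * T (q + d - j))"
    by (rule member_le_sum) auto
  then have "T q * T d \<le> (\<Sum>j\<le>q+d. T j * T (q + d - j))" by simp
  then have "real (T q * T d) \<le> real (\<Sum>j\<le>q+d. T j * T (q + d - j))"
    by (simp only: of_nat_le_iff)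
  then show ?thesis by (simp add: T_Suc)
qed

lemma Ff_le_Suc: "Ff (Suc s) q \<le> real (s+1) * 2^(s+1) * real (T q)"
proof (induction s)
  case 0
  then show ?case by (simp add: Ff_def)
next
  case (Suc s)
  have rat: "(real (s+2) * real (2*q+s+1)) / (real (s+1) * real (q+s+2)) \<le> real (s+2) / real (s+1) * 2"
  proof -
    have "real (2*q+s+1) / real (q+s+2) \<le> 2" by (simp add: divide_le_eq)
    then have "real (s+2) / real (s+1) * (real (2*q+s+1) / real (q+s+2)) \<le> real (s+2) / real (s+1) * 2"
      by (intro mult_left_mono) auto
    then show ?thesis by simp
  qed
  have "Ff (Suc (Suc s)) q / real (T q) \<le> real (s+2) / real (s+1) * 2 * (real (s+1) * 2^(s+1))"
    unfolding Ff_ratio'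
  proof (rule mult_mono[OF rat])
    show "Ff (Suc s) q / real (T q) \<le> real (s + 1) * 2 ^ (s + 1)"
      using Suc T_pos_real[of q] by (simp add: divide_le_eq)
  qed (auto simp: Ff_nonneg)
  moreover have "real (s+2) / real (s+1) * 2 * (real (s+1) * 2^(s+1)) = real (s+2) * 2^(s+2)"
    by (simp add: field_simps)
  ultimately have "Ff (Suc (Suc s)) q / real (T q) \<le> real (s+2) * 2^(s+2)" by (rule ord_le_eq_trans)
  then have "Ff (Suc (Suc s)) q \<le> real (s+2) * 2^(s+2) * real (T q)"
    using T_pos_real[of q] by (simp add: pos_divide_le_eq)
  then show ?case by (simp add: add_ac)
qed

lemma Ff_le: "Ff r q \<le> real (r+1) * 2^r * real (T q)"
proof (cases r)
  case 0
  then show ?thesis using T_pos[of q] by (cases q) auto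
next
  case (Suc s)
  have "Ff r q \<le> real (s+1) * 2^(s+1) * real (T q)" using Ff_le_Suc Suc by simp
  also have "\<dots> \<le> real (r+1) * 2^r * real (T q)" using Suc by (intro mult_right_mono) auto
  finally show ?thesis .
qed


definition pk :: "nat \<Rightarrow> real" where "pk k = 1/2 * real ((2*k) choose k) * (3/16)^k"

definition Mb :: "nat \<Rightarrow> real" where "Mb k = 3 * (2 * real k + 3) * (3 * real k + 2)^2 * (3/4)^k"

definition cc :: "nat \<Rightarrow> nat \<Rightarrow> real" where "cc k i = real (Suc k choose i) * 2^i"

lemma prob_Suc: "prob_ds (Suc n) k = real (card (Pset n k)) / real (T (Suc n))"
  by (simp add: prob_ds_def card_ds T_def)

lemma prob_formula: "prob_ds (Suc n) k = real (T k) * (if 2*k \<le> n then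
   (\<Sum>i\<le>Suc k. cc k i * (if i \<le> n - 2*k then Ff (2*i) (n - 2*k - i) else 0)) else 0) / real (T (Suc n))"
  unfolding prob_Suc card_Pset_closed Af_pow_nth cc_def by simp

lemma sum_cc: "(\<Sum>i\<le>Suc k. cc k i) = 3^(Suc k)"
proof -
  have "(2 + 1 :: real)^(Suc k) = (\<Sum>i\<le>Suc k. of_nat (Suc k choose i) * 2^i * 1^(Suc k - i))"
    by (rule binomial_ring)
  then show ?thesis by (simp add: cc_def)
qed

lemma term_bound:
  assumes "i \<le> Suc k" "2*k \<le> n" "i \<le> n - 2*k"
  shows "Ff (2*i) (n - 2*k - i) / real (T (Suc n)) \<le> (2 * real k + 3) * (3 * real k + 2)^2 / 16^k"
proof -
  define q where "q = n - 2*k - i"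
  have n: "Suc n = q + Suc (2*k+i)" using assms by (simp add: q_def)
  have Tp: "real (T (2*k+i)) > 0" "real (T (Suc n)) > 0" "real (T q) \<ge> 0" using T_pos_real by auto
  have A: "Ff (2*i) q \<le> real (2*i+1) * 2^(2*i) * real (T q)" by (rule Ff_le)
  have B: "real (T q) * real (T (2*k+i)) \<le> real (T (Suc n))" unfolding n by (rule T_mult_le)
  have C: "4^(2*k+i) / (real (2*k+i) + 1)^2 \<le> real (T (2*k+i))" by (rule T_ge)
  have "Ff (2*i) q / real (T (Suc n)) \<le> real (2*i+1) * 2^(2*i) * real (T q) / real (T (Suc n))"
    using A Tp by (simp add: divide_right_mono)
  also have "\<dots> = real (2*i+1) * 2^(2*i) * (real (T q) / real (T (Suc n)))" by simp
  also have "real (T q) / real (T (Suc n)) \<le> 1 / real (T (2*k+i))"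
    using B Tp by (simp add: field_simps)
  also have "1 / real (T (2*k+i)) \<le> (real (2*k+i) + 1)^2 / 4^(2*k+i)"
  proof -
    have "4^(2*k+i) / (real (2*k+i) + 1)^2 > (0::real)" by simp
    then show ?thesis using C Tp by (simp add: field_simps)
  qed
  also have "real (2*i+1) * 2^(2*i) * ((real (2*k+i) + 1)^2 / 4^(2*k+i)) =
      real (2*i+1) * (real (2*k+i) + 1)^2 / 16^k"
  proof -
    have "(2::real)^(2*i) = 4^i" by (simp add: power_mult)
    moreover have "(4::real)^(2*k+i) = 16^k * 4^i" by (simp add: power_add power_mult)
    ultimately show ?thesis by simp
  qed
  also have "\<dots> \<le> (2 * real k + 3) * (3 * real k + 2)^2 / 16^k"
  proof -
    have "real (2*i+1) \<le> 2 * real k + 3" using assms by simp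
    moreover have "(real (2*k+i) + 1)^2 \<le> (3 * real k + 2)^2"
      using assms by (intro power_mono) auto
    ultimately show ?thesis
      by (intro divide_right_mono mult_mono) auto
  qed
  finally show ?thesis unfolding q_def by simp
qed

lemma aux_sum: fixes a t :: real
  shows "a * (\<Sum>i\<in>A. c i * x i) / t = a * (\<Sum>i\<in>A. c i * (x i / t))"
  by (simp add: sum_divide_distrib[symmetric])

lemma prob_nonneg: "prob_ds n k \<ge> 0"
  by (simp add: prob_ds_def)

lemma prob_bound: "prob_ds (Suc n) k \<le> Mb k"
proof (cases "2*k \<le> n")
  case False
  then show ?thesis by (simp add: prob_formula Mb_def)
next
  case True
  define B where "B = (2 * real k + 3) * (3 * real k + 2)^2 / 16^k"
  have "prob_ds (Suc n) k = real (T k) *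
      (\<Sum>i\<le>Suc k. cc k i * ((if i \<le> n - 2*k then Ff (2*i) (n - 2*k - i) else 0) / real (T (Suc n))))"
    using True by (simp only: prob_formula if_True aux_sum)
  also have "\<dots> \<le> real (T k) * (\<Sum>i\<le>Suc k. cc k i * B)"
  proof (rule mult_left_mono, rule sum_mono)
    fix i assume i: "i \<in> {..Suc k}"
    have "(if i \<le> n - 2*k then Ff (2*i) (n - 2*k - i) else 0) / real (T (Suc n)) \<le> B"
      using term_bound[of i k n] i True by (auto simp: B_def)
    then show "cc k i * ((if i \<le> n - 2*k then Ff (2*i) (n - 2*k - i) else 0) / real (T (Suc n))) \<le> cc k i * B"
      by (intro mult_left_mono) (auto simp: cc_def)
  qed simp
  also have "\<dots> = real (T k) * 3^(Suc k) * B"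
    by (subst sum_distrib_right[symmetric]) (simp only: sum_cc mult.assoc)
  also have "\<dots> \<le> 4^k * 3^(Suc k) * B"
    by (intro mult_right_mono T_le_4pow) (auto simp: B_def)
  also have "\<dots> = Mb k"
  proof -
    have h16: "(16::real)^k = 4^k * 4^k" by (simp add: power_mult_distrib[symmetric])
    have h34: "(3/4::real)^k = 3^k / 4^k" by (simp add: power_divide)
    have nz: "(4::real)^k \<noteq> 0" by simp
    show ?thesis unfolding B_def Mb_def h16 h34 using nz
      by (simp add: divide_simps)
  qed
  finally show ?thesis .
qed


lemma sum_i_choose: "(\<Sum>i\<le>Suc k. cc k i * real i) = 2 * real (Suc k) * 3^k"
proof -
  have "(\<Sum>i\<le>Suc k. cc k i * real i) = (\<Sum>i\<le>k. cc k (Suc i) * real (Suc i))"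
    by (subst sum.atMost_Suc_shift) simp
  also have "\<dots> = (\<Sum>i\<le>k. 2 * real (Suc k) * (real (k choose i) * 2^i))"
  proof (rule sum.cong[OF refl])
    fix i
    have "real (Suc i) * real (Suc k choose Suc i) = real (Suc k) * real (k choose i)"
      using Suc_times_binomial[of i k] by (simp only: of_nat_mult[symmetric])
    have "cc k (Suc i) * real (Suc i) = 2 * 2^i * (real (Suc i) * real (Suc k choose Suc i))"
      by (simp only: cc_def power_Suc mult_ac)
    also have "\<dots> = 2 * 2^i * (real (Suc k) * real (k choose i))"
      by (simp only: \<open>real (Suc i) * real (Suc k choose Suc i) = real (Suc k) * real (k choose i)\<close>)
    finally show "cc k (Suc i) * real (Suc i) = 2 * real (Suc k) * (real (k choose i) * 2^i)"
      by (simp only: mult_ac)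
  qed
  also have "\<dots> = 2 * real (Suc k) * (\<Sum>i\<le>k. real (k choose i) * 2^i)"
    by (simp add: sum_distrib_left)
  also have "(\<Sum>i\<le>k. real (k choose i) * 2^i) = 3^k"
  proof -
    have "(2 + 1 :: real)^k = (\<Sum>i\<le>k. of_nat (k choose i) * 2^i * 1^(k - i))"
      by (rule binomial_ring)
    then show ?thesis by simp
  qed
  finally show ?thesis .
qed

lemma limit_value:
  "real (T k) * (\<Sum>i\<le>Suc k. cc k i * (real (2*i) * 2^(2*i) / 2 * (1/4)^(2*k+1+i))) = pk k"
proof -
  have "(\<Sum>i\<le>Suc k. cc k i * (real (2*i) * 2^(2*i) / 2 * (1/4)^(2*k+1+i))) =
        (\<Sum>i\<le>Suc k. cc k i * real i * (1/4)^(2*k+1))"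
  proof (rule sum.cong[OF refl])
    fix i
    have "(2::real)^(2*i) * (1/4)^i = 1"
      by (simp add: power_mult power_divide)
    then have "real (2*i) * 2^(2*i) / 2 * (1/4::real)^(2*k+1+i) = real i * (1/4)^(2*k+1) * (2^(2*i) * (1/4)^i)"
      by (simp add: power_add)
    also have "\<dots> = real i * (1/4)^(2*k+1)" using \<open>(2::real)^(2*i) * (1/4)^i = 1\<close> by simp
    finally show "cc k i * (real (2*i) * 2^(2*i) / 2 * (1/4)^(2*k+1+i)) = cc k i * real i * (1/4)^(2*k+1)"
      by simp
  qed
  also have "\<dots> = (\<Sum>i\<le>Suc k. cc k i * real i) * (1/4)^(2*k+1)"
    by (simp only: sum_distrib_right)
  also have "\<dots> = 2 * real (Suc k) * 3^k * (1/4)^(2*k+1)"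
    by (simp only: sum_i_choose)
  finally have hS: "(\<Sum>i\<le>Suc k. cc k i * (real (2*i) * 2^(2*i) / 2 * (1/4)^(2*k+1+i))) =
     2 * real (Suc k) * 3^k * (1/4)^(2*k+1)" .
  have "real (T k) * (\<Sum>i\<le>Suc k. cc k i * (real (2*i) * 2^(2*i) / 2 * (1/4)^(2*k+1+i))) =
       (real (T k) * (real k + 1)) * 2 * 3^k * (1/4)^(2*k+1)"
    unfolding hS by (simp only: of_nat_Suc mult_ac add_ac)
  also have "\<dots> = real ((2*k) choose k) * 2 * 3^k * (1/4)^(2*k+1)"
    by (simp only: T_binom)
  also have "\<dots> = pk k"
  proof -
    have "(1/4::real)^(2*k+1) = 1/4 * (1/16)^k"
      by (simp add: power_add power_mult power_divide)
    moreover have "(3/16::real)^k = 3^k * (1/16)^k"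
      by (simp add: power_divide)
    ultimately show ?thesis by (simp add: pk_def)
  qed
  finally show ?thesis .
qed

lemma prob_lim: "(\<lambda>n. prob_ds n k) \<longlonglongrightarrow> pk k"
proof (rule LIMSEQ_offset[where k = "3*k+2"])
  define m where "m = (\<lambda>q i. q + (Suc k - i))"
  have eq: "prob_ds (q + (3*k+2)) k = real (T k) *
     (\<Sum>i\<le>Suc k. cc k i * ((Ff (2*i) (m q i) / real (T (m q i))) *
         (real (T (m q i)) / real (T (m q i + (2*k+1+i))))))" for q
  proof -
    have s: "q + (3*k+2) = Suc (q + 3*k + 1)" by simp
    have "prob_ds (q + (3*k+2)) k = real (T k) *
      (\<Sum>i\<le>Suc k. cc k i * (if i \<le> q + 3*k + 1 - 2*k then Ff (2*i) (q + 3*k + 1 - 2*k - i) else 0)) /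
       real (T (Suc (q + 3*k + 1)))"
      unfolding s prob_formula by simp
    also have "\<dots> = real (T k) *
      (\<Sum>i\<le>Suc k. cc k i * ((if i \<le> q + 3*k + 1 - 2*k then Ff (2*i) (q + 3*k + 1 - 2*k - i) else 0) /
       real (T (Suc (q + 3*k + 1)))))"
      by (rule aux_sum)
    also have "\<dots> = real (T k) *
     (\<Sum>i\<le>Suc k. cc k i * ((Ff (2*i) (m q i) / real (T (m q i))) *
         (real (T (m q i)) / real (T (m q i + (2*k+1+i))))))"
    proof (rule arg_cong[where f = "\<lambda>x. real (T k) * x"], rule sum.cong[OF refl])
      fix i assume i: "i \<in> {..Suc k}"
      have a: "i \<le> q + 3*k + 1 - 2*k" "q + 3*k + 1 - 2*k - i = m q i" "m q i + (2*k+1+i) = Suc (q + 3*k + 1)"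
        using i by (auto simp: m_def)
      show "cc k i * ((if i \<le> q + 3*k + 1 - 2*k then Ff (2*i) (q + 3*k + 1 - 2*k - i) else 0) /
       real (T (Suc (q + 3*k + 1)))) = cc k i * ((Ff (2*i) (m q i) / real (T (m q i))) *
         (real (T (m q i)) / real (T (m q i + (2*k+1+i)))))"
        unfolding a(3) using a(1,2) by simp
    qed
    finally show ?thesis .
  qed
  have lim: "(\<lambda>q. real (T k) *
     (\<Sum>i\<le>Suc k. cc k i * ((Ff (2*i) (m q i) / real (T (m q i))) *
         (real (T (m q i)) / real (T (m q i + (2*k+1+i)))))))
     \<longlonglongrightarrow> real (T k) * (\<Sum>i\<le>Suc k. cc k i * (real (2*i) * 2^(2*i) / 2 * (1/4)^(2*k+1+i)))"
  proof (intro tendsto_mult_left tendsto_sum tendsto_mult)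
    fix i
    show "(\<lambda>q. Ff (2*i) (m q i) / real (T (m q i))) \<longlonglongrightarrow> real (2*i) * 2^(2*i) / 2"
      unfolding m_def by (rule LIMSEQ_ignore_initial_segment[OF Ff_lim])
    show "(\<lambda>q. real (T (m q i)) / real (T (m q i + (2*k+1+i)))) \<longlonglongrightarrow> (1/4)^(2*k+1+i)"
      unfolding m_def using LIMSEQ_ignore_initial_segment[OF T_lim_ratio[of "2*k+1+i"], of "Suc k - i"]
      by simp
  qed
  show "(\<lambda>q. prob_ds (q + (3*k+2)) k) \<longlonglongrightarrow> pk k"
    unfolding eq limit_value[symmetric] by (rule lim)
qed


lemma ds_le_n: "t \<in> trees n \<Longrightarrow> ds t \<le> n"
  using ds_le[of t] by (simp add: trees_def)

lemma prob_zero: "k > n \<Longrightarrow> prob_ds n k = 0"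
proof -
  assume "k > n"
  then have "{t \<in> trees n. ds t = k} = {}" using ds_le_n by fastforce
  then show ?thesis by (simp add: prob_ds_def)
qed

lemma fiber_sum:
  fixes g :: "nat \<Rightarrow> real"
  shows "(\<Sum>t\<in>trees n. g (ds t)) / real (card (trees n)) = (\<Sum>k\<le>n. g k * prob_ds n k)"
proof -
  have "(\<Sum>t\<in>trees n. g (ds t)) = (\<Sum>t\<in>trees n. \<Sum>k\<le>n. if ds t = k then g k else 0)"
  proof (rule sum.cong[OF refl])
    fix t assume "t \<in> trees n"
    then have "ds t \<le> n" by (rule ds_le_n)
    then show "g (ds t) = (\<Sum>k\<le>n. if ds t = k then g k else 0)"
      by (simp add: sum.delta)
  qed
  also have "\<dots> = (\<Sum>k\<le>n. \<Sum>t\<in>trees n. if ds t = k then g k else 0)"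
    by (rule sum.swap)
  also have "\<dots> = (\<Sum>k\<le>n. g k * real (card {t \<in> trees n. ds t = k}))"
  proof (rule sum.cong[OF refl])
    fix k
    have "(\<Sum>t\<in>trees n. if ds t = k then g k else 0) = (\<Sum>t\<in>{t \<in> trees n. ds t = k}. g k)"
      by (rule sum.inter_filter[symmetric]) simp
    then show "(\<Sum>t\<in>trees n. if ds t = k then g k else 0) = g k * real (card {t \<in> trees n. ds t = k})"
      by simp
  qed
  finally show ?thesis
    by (simp add: prob_ds_def sum_divide_distrib)
qed

lemma moment_suminf:
  fixes g :: "nat \<Rightarrow> real"
  shows "suminf (\<lambda>k. g k * prob_ds n k) = (\<Sum>t\<in>trees n. g (ds t)) / real (card (trees n))"
proof -
  have "suminf (\<lambda>k. g k * prob_ds n k) = (\<Sum>k\<le>n. g k * prob_ds n k)"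
    by (rule suminf_finite) (auto simp: prob_zero)
  then show ?thesis by (simp add: fiber_sum)
qed

lemma Mb_nonneg: "Mb k \<ge> 0"
  by (simp add: Mb_def)

lemma pk_nonneg: "pk k \<ge> 0"
  by (simp add: pk_def)

lemma summable_dom: "summable (\<lambda>k. (real k^2 + 1) * Mb k)"
proof (rule summable_comparison_test_ev)
  have "(\<lambda>k. (real k^2 + 1) * (3 * (2 * real k + 3) * (3 * real k + 2)^2 * (3/4)^k) / (7/8)^k) \<longlonglongrightarrow> 0"
    by real_asymp
  then have "eventually (\<lambda>k. (real k^2 + 1) * (3 * (2 * real k + 3) * (3 * real k + 2)^2 * (3/4)^k) / (7/8)^k < 1) sequentially"
    by (rule order_tendstoD) simp
  then show "eventually (\<lambda>k. norm ((real k^2 + 1) * Mb k) \<le> (7/8)^k) sequentially"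
  proof (rule eventually_mono)
    fix k assume "(real k^2 + 1) * (3 * (2 * real k + 3) * (3 * real k + 2)^2 * (3/4)^k) / (7/8)^k < 1"
    then have "(real k^2 + 1) * Mb k < (7/8)^k" by (simp add: Mb_def divide_less_eq)
    then show "norm ((real k^2 + 1) * Mb k) \<le> (7/8)^k" using Mb_nonneg[of k] by simp
  qed
  show "summable (\<lambda>k. (7/8::real)^k)" by (rule summable_geometric) simp
qed

lemma tannery_moment:
  fixes g :: "nat \<Rightarrow> real"
  assumes g0: "\<And>k. 0 \<le> g k" and g1: "\<And>k. g k \<le> real k^2 + 1"
  shows "(\<lambda>n. suminf (\<lambda>k. g k * prob_ds n k)) \<longlonglongrightarrow> suminf (\<lambda>k. g k * pk k) \<and> summable (\<lambda>k. g k * pk k)"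
proof -
  have b: "norm (g k * prob_ds n k) \<le> (real k^2 + 1) * Mb k" if n1: "n \<ge> 1" for k n
  proof -
    obtain n' where n': "n = Suc n'" using n1 by (cases n) auto
    have "norm (g k * prob_ds n k) = g k * prob_ds n k" using g0 prob_nonneg by simp
    also have "\<dots> \<le> g k * Mb k" unfolding n' using g0 prob_bound by (intro mult_left_mono) auto
    also have "\<dots> \<le> (real k^2 + 1) * Mb k" using g1 Mb_nonneg by (intro mult_right_mono) auto
    finally show ?thesis .
  qed
  have bound: "eventually (\<lambda>(k,n). norm (g k * prob_ds n k) \<le> (real k^2 + 1) * Mb k) (at_top \<times>\<^sub>F sequentially)"
    unfolding eventually_prod_filter
    by (intro exI[of _ "\<lambda>k. True"] exI[of _ "\<lambda>n. n \<ge> 1"]) (auto intro: b[unfolded real_norm_def] simp: eventually_ge_at_top)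
  have lim: "\<And>k. (\<lambda>n. g k * prob_ds n k) \<longlonglongrightarrow> g k * pk k"
    by (intro tendsto_mult_left prob_lim)
  have T: "eventually (\<lambda>n. summable (\<lambda>k. norm (g k * prob_ds n k))) sequentially \<and>
           summable (\<lambda>n. norm (g n * pk n)) \<and>
           ((\<lambda>n. suminf (\<lambda>k. g k * prob_ds n k)) \<longlongrightarrow> suminf (\<lambda>k. g k * pk k)) sequentially"
    by (rule tannerys_theorem[OF lim bound summable_dom]) simp
  have "summable (\<lambda>k. g k * pk k)"
    using T g0 pk_nonneg by (simp add: abs_mult)
  then show ?thesis using T by simp
qed


lemma pk_rec: "8 * (real k + 1) * pk (Suc k) = 3 * (2 * real k + 1) * pk k"
proof -
  have b1: "real ((2*k) choose k) = real (T k) * (real k + 1)" by (simp add: T_binom)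
  have b2: "real ((2*Suc k) choose Suc k) = real (T (Suc k)) * (real (Suc k) + 1)"
    using T_binom[of "Suc k"] by (rule sym)
  have e: "real (Suc k) + 1 = real k + 2" by simp
  have r: "real (T (Suc k)) * (real (Suc k) + 1) = 2 * (2 * real k + 1) * real (T k)"
    unfolding e by (rule T_ratio)
  show ?thesis unfolding pk_def b1 b2 r by (simp add: field_simps)
qed

lemma sums_shift0: "f 0 = 0 \<Longrightarrow> f sums s \<Longrightarrow> (\<lambda>k. f (Suc k)) sums (s::real)"
  using sums_Suc_iff[of f s] by simp

lemma corollary_main:
  shows "(\<forall>k::nat. (\<lambda>n. prob_ds n k) \<longlonglongrightarrow> 1/2 * real ((2*k) choose k) * (3/16)^k)
     \<and> exp_ds \<longlonglongrightarrow> 3/2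
     \<and> var_ds \<longlonglongrightarrow> 6"
proof -
  define S where "S = suminf pk"
  define M where "M = suminf (\<lambda>k. real k * pk k)"
  define Q where "Q = suminf (\<lambda>k. real k^2 * pk k)"
  have t0: "(\<lambda>n. suminf (\<lambda>k. 1 * prob_ds n k)) \<longlonglongrightarrow> suminf (\<lambda>k. 1 * pk k) \<and> summable (\<lambda>k. 1 * pk k)"
    by (rule tannery_moment) auto
  have t1: "(\<lambda>n. suminf (\<lambda>k. real k * prob_ds n k)) \<longlonglongrightarrow> suminf (\<lambda>k. real k * pk k) \<and> summable (\<lambda>k. real k * pk k)"
  proof (rule tannery_moment)
    fix k
    have h: "0 \<le> (real k - 1)^2" by simp
    show "real k \<le> real k^2 + 1"
      using h unfolding power2_diff by simp
  qed auto
  have t2: "(\<lambda>n. suminf (\<lambda>k. real k^2 * prob_ds n k)) \<longlonglongrightarrow> suminf (\<lambda>k. real k^2 * pk k) \<and> summable (\<lambda>k. real k^2 * pk k)"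
    by (rule tannery_moment) auto
  have sS: "pk sums S" using t0 by (simp add: S_def summable_sums)
  have sM: "(\<lambda>k. real k * pk k) sums M" using t1 by (simp add: M_def summable_sums)
  have sQ: "(\<lambda>k. real k^2 * pk k) sums Q" using t2 by (simp add: Q_def summable_sums)
  have one: "suminf (\<lambda>k. 1 * prob_ds n k) = 1" for n
  proof -
    have "suminf (\<lambda>k. 1 * prob_ds n k) = (\<Sum>t\<in>trees n. 1) / real (card (trees n))"
      using moment_suminf[of "\<lambda>k. 1" n] by simp
    also have "\<dots> = 1" using T_pos[of n] by (auto simp: T_def)
    finally show ?thesis .
  qed
  have S1: "S = 1"
  proof -
    have "(\<lambda>n. 1::real) \<longlonglongrightarrow> S" using t0 one by (simp add: S_def)
    then show ?thesis by (simp add: LIMSEQ_const_iff)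
  qed
  have M32: "M = 3/2"
  proof -
    have a: "(\<lambda>k. real (Suc k) * pk (Suc k)) sums M"
      using sums_shift0[OF _ sM] by simp
    have "(\<lambda>k. 8 * (real (Suc k) * pk (Suc k))) sums (8 * M)"
      by (rule sums_mult[OF a])
    moreover have "(\<lambda>k. 8 * (real (Suc k) * pk (Suc k))) = (\<lambda>k. 6 * (real k * pk k) + 3 * pk k)"
    proof
      fix k show "8 * (real (Suc k) * pk (Suc k)) = 6 * (real k * pk k) + 3 * pk k"
        using pk_rec[of k] by (simp add: algebra_simps)
    qed
    moreover have "(\<lambda>k. 6 * (real k * pk k) + 3 * pk k) sums (6 * M + 3 * S)"
      by (intro sums_add sums_mult sM sS)
    ultimately have "8 * M = 6 * M + 3 * S" by (metis sums_unique2)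
    then show ?thesis using S1 by simp
  qed
  have Q334: "Q = 33/4"
  proof -
    have a: "(\<lambda>k. real (Suc k)^2 * pk (Suc k)) sums Q"
      using sums_shift0[OF _ sQ] by simp
    have "(\<lambda>k. 8 * (real (Suc k)^2 * pk (Suc k))) sums (8 * Q)"
      by (rule sums_mult[OF a])
    moreover have "(\<lambda>k. 8 * (real (Suc k)^2 * pk (Suc k))) = (\<lambda>k. 6 * (real k^2 * pk k) + 9 * (real k * pk k) + 3 * pk k)"
    proof
      fix k
      have "8 * (real (Suc k)^2 * pk (Suc k)) = (real k + 1) * (8 * (real k + 1) * pk (Suc k))"
        by (simp add: power2_eq_square algebra_simps)
      also have "\<dots> = (real k + 1) * (3 * (2 * real k + 1) * pk k)" by (simp only: pk_rec)
      finally show "8 * (real (Suc k)^2 * pk (Suc k)) = 6 * (real k^2 * pk k) + 9 * (real k * pk k) + 3 * pk k"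
        by (simp add: power2_eq_square algebra_simps)
    qed
    moreover have "(\<lambda>k. 6 * (real k^2 * pk k) + 9 * (real k * pk k) + 3 * pk k) sums (6 * Q + 9 * M + 3 * S)"
      by (intro sums_add sums_mult sM sS sQ)
    ultimately have "8 * Q = 6 * Q + 9 * M + 3 * S" by (metis sums_unique2)
    then show ?thesis using S1 M32 by simp
  qed
  have E: "exp_ds n = suminf (\<lambda>k. real k * prob_ds n k)" for n
    using moment_suminf[of real n] by (simp add: exp_ds_def)
  have V: "var_ds n = suminf (\<lambda>k. real k^2 * prob_ds n k) - (exp_ds n)^2" for n
  proof -
    define N where "N = real (card (trees n))"
    define \<mu> where "\<mu> = exp_ds n"
    have N: "N > 0" using T_pos[of n] by (simp add: N_def T_def)
    have mu: "(\<Sum>t\<in>trees n. real (ds t)) = N * \<mu>"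
      using N by (simp add: \<mu>_def exp_ds_def N_def)
    have "(\<Sum>t\<in>trees n. (real (ds t) - \<mu>)^2) =
        (\<Sum>t\<in>trees n. real (ds t)^2) - 2 * \<mu> * (\<Sum>t\<in>trees n. real (ds t)) + N * \<mu>^2"
      by (simp add: power2_diff sum.distrib sum_subtractf sum_distrib_left N_def mult_ac)
    also have "\<dots> = (\<Sum>t\<in>trees n. real (ds t)^2) - N * \<mu>^2"
      unfolding mu by (simp add: power2_eq_square algebra_simps)
    finally have "var_ds n = ((\<Sum>t\<in>trees n. real (ds t)^2) - N * \<mu>^2) / N"
      by (simp add: var_ds_def \<mu>_def N_def)
    also have "\<dots> = (\<Sum>t\<in>trees n. real (ds t)^2) / N - \<mu>^2"
      using N by (simp add: field_simps)
    also have "(\<Sum>t\<in>trees n. real (ds t)^2) / N = suminf (\<lambda>k. real k^2 * prob_ds n k)"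
      using moment_suminf[of "\<lambda>k. real k^2" n] by (simp add: N_def)
    finally show ?thesis by (simp add: \<mu>_def)
  qed
  have lim1: "exp_ds \<longlonglongrightarrow> 3/2"
    using t1 M32 unfolding M_def by (simp add: E[abs_def])
  have lim2: "var_ds \<longlonglongrightarrow> 6"
  proof -
    have "(\<lambda>n. suminf (\<lambda>k. real k^2 * prob_ds n k) - (exp_ds n)^2) \<longlonglongrightarrow> Q - (3/2)^2"
      using t2 lim1 unfolding Q_def by (intro tendsto_diff tendsto_power) auto
    moreover have "Q - (3/2)^2 = (6::real)" using Q334 by (simp add: power2_eq_square)
    ultimately show ?thesis by (simp add: V[abs_def])
  qed
  show ?thesis using prob_lim lim1 lim2 by (simp add: pk_def)
qed

theorem corollary4p2:
  shows "(\<forall>k::nat. (\<lambda>n. prob_ds n k) \<longlonglongrightarrow> 1/2 * real ((2*k) choose k) * (3/16)^k)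
     \<and> exp_ds \<longlonglongrightarrow> 3/2
     \<and> var_ds \<longlonglongrightarrow> 6"
  by (rule corollary_main)

end
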